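(* For every finite simple graph $G$, $\gamma_{sR}(G\vee K_1)\geq 1$. Moreover, if $\gamma_{sR}(G)=0$, then $\gamma_{sR}(G\vee K_1)=1$.
   Context: For a graph $G=(V,E)$ and $x\in V$, $N_G[x]=\{x\}\cup\{y: xy\in E\}$. A signed Roman dominating function (SRDF) on $G$ is a function $f:V\to\{-1,1,2\}$ such that (a) $\sum_{y\in N_G[x]}f(y)\geq 1$ for every $x\in V$, and (b) every vertex $x$ with $f(x)=-1$ is adjacent to at least one vertex $y$ with $f(y)=2$. The weight of $f$ is $\sum_{x\in V}f(x)$, and $\gamma_{sR}(G)$ is the minimum weight of an SRDF on $G$. The join $G_1\vee G_2$ of two graphs has vertex set $V(G_1)\cup V(G_2)$ (disjoint union) and edge set $E(G_1)\cup E(G_2)\cup\{uv: u\in V(G_1), v\in V(G_2)\}$. $K_1$ is the graph with a single vertex. *)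

theory Defs
  imports Main
begin

definition simple_graph :: "'a set \<Rightarrow> ('a \<Rightarrow> 'a \<Rightarrow> bool) \<Rightarrow> bool" where
  "simple_graph V E \<longleftrightarrow> finite V \<and> (\<forall>x y. E x y \<longrightarrow> x \<in> V \<and> y \<in> V)
     \<and> (\<forall>x y. E x y \<longrightarrow> E y x) \<and> (\<forall>x. \<not> E x x)"

definition closed_nbhd :: "'a set \<Rightarrow> ('a \<Rightarrow> 'a \<Rightarrow> bool) \<Rightarrow> 'a \<Rightarrow> 'a set" where
  "closed_nbhd V E x = {x} \<union> {y \<in> V. E x y}"

definition is_SRDF :: "'a set \<Rightarrow> ('a \<Rightarrow> 'a \<Rightarrow> bool) \<Rightarrow> ('a \<Rightarrow> int) \<Rightarrow> bool" where
  "is_SRDF V E f \<longleftrightarrow>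
     (\<forall>x\<in>V. f x \<in> {-1, 1, 2})
     \<and> (\<forall>x\<in>V. (\<Sum>y\<in>closed_nbhd V E x. f y) \<ge> 1)
     \<and> (\<forall>x\<in>V. f x = -1 \<longrightarrow> (\<exists>y\<in>V. E x y \<and> f y = 2))"

definition weight :: "'a set \<Rightarrow> ('a \<Rightarrow> int) \<Rightarrow> int" where
  "weight V f = (\<Sum>x\<in>V. f x)"

text \<open>Signed Roman domination number: minimum weight of an SRDF
  (the set of weights is finite and nonempty for finite V: the constant 1 is an SRDF).\<close>
definition gamma_sR :: "'a set \<Rightarrow> ('a \<Rightarrow> 'a \<Rightarrow> bool) \<Rightarrow> int" where
  "gamma_sR V E = Min {weight V f | f. is_SRDF V E f}"

text \<open>Join G \<or> K_1: the new vertex is None, old vertices are Some x.\<close>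
definition join_K1_V :: "'a set \<Rightarrow> 'a option set" where
  "join_K1_V V = insert None (Some ` V)"

fun join_K1_E :: "'a set \<Rightarrow> ('a \<Rightarrow> 'a \<Rightarrow> bool) \<Rightarrow> 'a option \<Rightarrow> 'a option \<Rightarrow> bool" where
  "join_K1_E V E (Some x) (Some y) = E x y"
| "join_K1_E V E None (Some y) = (y \<in> V)"
| "join_K1_E V E (Some x) None = (x \<in> V)"
| "join_K1_E V E None None = False"

end

theory Submission
  imports Defs
begin

lemma srdf_bounds:
  assumes "is_SRDF V E f"
  shows "- int (card V) \<le> weight V f \<and> weight V f \<le> 2 * int (card V)"
proof -
  have b: "\<forall>x\<in>V. -1 \<le> f x \<and> f x \<le> 2" using assms unfolding is_SRDF_def by auto
  have "(\<Sum>x\<in>V. (-1::int)) \<le> (\<Sum>x\<in>V. f x)" by (rule sum_mono) (use b in auto)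
  moreover have "(\<Sum>x\<in>V. f x) \<le> (\<Sum>x\<in>V. (2::int))" by (rule sum_mono) (use b in auto)
  ultimately show ?thesis unfolding weight_def by simp
qed

lemma const1_srdf:
  assumes "finite V"
  shows "is_SRDF V E (\<lambda>_. 1)"
proof -
  have "\<And>x. x \<in> V \<Longrightarrow> (\<Sum>y\<in>closed_nbhd V E x. (1::int)) \<ge> 1"
  proof -
    fix x assume "x \<in> V"
    have fin: "finite (closed_nbhd V E x)" using assms unfolding closed_nbhd_def by auto
    have "x \<in> closed_nbhd V E x" unfolding closed_nbhd_def by auto
    hence "card (closed_nbhd V E x) \<ge> 1" using fin
      by (metis One_nat_def Suc_leI card_gt_0_iff empty_iff)
    thus "(\<Sum>y\<in>closed_nbhd V E x. (1::int)) \<ge> 1" by simp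
  qed
  thus ?thesis unfolding is_SRDF_def by auto
qed

lemma weights_fin: "finite {weight V f | f. is_SRDF V E f}"
  by (rule finite_subset[of _ "{- int (card V) .. 2 * int (card V)}"])
     (use srdf_bounds in fastforce, simp)

lemma gamma_le:
  assumes "is_SRDF V E f"
  shows "gamma_sR V E \<le> weight V f"
  unfolding gamma_sR_def using weights_fin assms by (intro Min_le) auto

lemma gamma_ex:
  assumes "finite V"
  shows "\<exists>f. is_SRDF V E f \<and> gamma_sR V E = weight V f"
proof -
  have ne: "{weight V f | f. is_SRDF V E f} \<noteq> {}" using const1_srdf[OF assms] by auto
  have "gamma_sR V E \<in> {weight V f | f. is_SRDF V E f}"
    unfolding gamma_sR_def using Min_in[OF weights_fin ne] .
  thus ?thesis by auto
qed

lemma join_nbhd_None: "closed_nbhd (join_K1_V V) (join_K1_E V E) None = join_K1_V V"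
  unfolding closed_nbhd_def join_K1_V_def by (auto elim: join_K1_E.elims)

lemma join_nbhd_Some:
  assumes "x \<in> V" "simple_graph V E"
  shows "closed_nbhd (join_K1_V V) (join_K1_E V E) (Some x) = insert None (Some ` closed_nbhd V E x)"
  using assms unfolding closed_nbhd_def join_K1_V_def simple_graph_def by auto

theorem mainTheorem2:
  fixes V :: "'a set" and E :: "'a \<Rightarrow> 'a \<Rightarrow> bool"
  assumes "simple_graph V E"
  shows "gamma_sR (join_K1_V V) (join_K1_E V E) \<ge> 1
     \<and> (gamma_sR V E = 0 \<longrightarrow> gamma_sR (join_K1_V V) (join_K1_E V E) = 1)"
proof -
  have finV: "finite V" using assms unfolding simple_graph_def by auto
  have finJ: "finite (join_K1_V V)" using finV unfolding join_K1_V_def by auto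
  have part1: "gamma_sR (join_K1_V V) (join_K1_E V E) \<ge> 1"
  proof -
    obtain f where f: "is_SRDF (join_K1_V V) (join_K1_E V E) f"
      "gamma_sR (join_K1_V V) (join_K1_E V E) = weight (join_K1_V V) f"
      using gamma_ex[OF finJ] by blast
    have "None \<in> join_K1_V V" unfolding join_K1_V_def by auto
    hence "(\<Sum>y\<in>closed_nbhd (join_K1_V V) (join_K1_E V E) None. f y) \<ge> 1"
      using f(1) unfolding is_SRDF_def by blast
    thus ?thesis using f(2) unfolding join_nbhd_None weight_def by simp
  qed
  moreover have "gamma_sR (join_K1_V V) (join_K1_E V E) = 1" if g0: "gamma_sR V E = 0"
  proof -
    obtain g where g: "is_SRDF V E g" "weight V g = 0"
      using gamma_ex[OF finV, of E] g0 by auto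
    define f where "f = (\<lambda>u. case u of None \<Rightarrow> (1::int) | Some x \<Rightarrow> g x)"
    have sumS: "(\<Sum>y\<in>Some ` A. f y) = (\<Sum>y\<in>A. g y)" for A
      by (subst sum.reindex) (auto simp: f_def)
    have wf: "weight (join_K1_V V) f = 1"
      unfolding weight_def join_K1_V_def using finV g(2)
      by (subst sum.insert) (auto simp: sumS weight_def, simp add: f_def)
    have "is_SRDF (join_K1_V V) (join_K1_E V E) f"
      unfolding is_SRDF_def
    proof (intro conjI ballI impI)
      fix u assume u: "u \<in> join_K1_V V"
      show "f u \<in> {-1,1,2}"
        using u g(1) unfolding join_K1_V_def is_SRDF_def f_def by auto
      show "(\<Sum>y\<in>closed_nbhd (join_K1_V V) (join_K1_E V E) u. f y) \<ge> 1"
      proof (cases u)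
        case None
        thus ?thesis using wf join_nbhd_None[of V E] unfolding weight_def by simp
      next
        case (Some x)
        hence x: "x \<in> V" using u unfolding join_K1_V_def by auto
        have fn: "finite (closed_nbhd V E x)" using finV unfolding closed_nbhd_def by auto
        have "(\<Sum>y\<in>closed_nbhd V E x. g y) \<ge> 1" using g(1) x unfolding is_SRDF_def by blast
        moreover have "(\<Sum>y\<in>insert None (Some ` closed_nbhd V E x). f y) = 1 + (\<Sum>y\<in>closed_nbhd V E x. g y)"
          using fn by (subst sum.insert) (auto simp: sumS, simp add: f_def)
        ultimately show ?thesis using Some join_nbhd_Some[OF x assms] by simp
      qed
    next
      fix u assume u: "u \<in> join_K1_V V" and m: "f u = -1"
      then obtain x where ux: "u = Some x" "x \<in> V" "g x = -1"
        unfolding join_K1_V_def f_def by (auto split: option.splits)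
      then obtain y where "y \<in> V" "E x y" "g y = 2" using g(1) unfolding is_SRDF_def by blast
      thus "\<exists>y\<in>join_K1_V V. join_K1_E V E u y \<and> f y = 2"
        using ux by (intro bexI[of _ "Some y"]) (auto simp: f_def join_K1_V_def)
    qed
    hence "gamma_sR (join_K1_V V) (join_K1_E V E) \<le> 1" using gamma_le wf by metis
    thus ?thesis using part1 by simp
  qed
  ultimately show ?thesis by blast
qed

end
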